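(* Let $\varphi\colon\mathcal{A}\to\mathcal{A}^*$ be a substitution of constant length $k$. Let $x\in\mathcal{A}^{\mathbf{Z}}$, let $(x^i)_{i\geq0}$ be a sequence of elements of $\mathcal{A}^{\mathbf{Z}}$ and $(c_i)_{i\geq0}$ a sequence of elements of $[0,k-1]$ such that $x^0=x$ and $x^i=T^{c_i}(\varphi(x^{i+1}))$ for all $i\geq0$. Then $$\mathrm{K}_k(x)=\Big\{\Psi_{\mathbf{i}}(x^m): m\geq0,\ \mathbf{i}\in[0,k-1]^m,\ \sum_{l=0}^{m-1}i_{m-l-1}k^l\geq\sum_{l=0}^{m-1}c_lk^l\Big\}\cup\Big\{\Psi_{\mathbf{i}}(T(x^m)): m\geq0,\ \mathbf{i}\in[0,k-1]^m,\ \sum_{l=0}^{m-1}i_{m-l-1}k^l<\sum_{l=0}^{m-1}c_lk^l\Big\}.$$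
   Context: $\varphi$ has constant length $k\geq2$ ($|\varphi(a)|=k$ for all $a$) and acts on $\mathcal{A}^{\mathbf{Z}}$ by concatenation with $\varphi(x_0)$ starting at position $0$; $T$ is the shift $(Tx)_n=x_{n+1}$. For $i\in[0,k-1]$, $\Psi_i\colon\mathcal{A}\to\mathcal{A}$, $a\mapsto\varphi(a)_i$ (the $i$-th letter, indexing from $0$), extended letterwise to $\mathcal{A}^{\mathbf{Z}}$. For $\mathbf{i}=i_0\cdots i_{m-1}\in[0,k-1]^m$, $\Psi_{\mathbf{i}}=\Psi_{i_{m-1}}\circ\cdots\circ\Psi_{i_0}$, and $\Psi_{\mathbf{i}}$ is the identity when $m=0$. The $k$-kernel of a two-sided sequence $x=(x_n)_{n\in\mathbf{Z}}$ is $\mathrm{K}_k(x)=\{(x_{k^mn+i})_{n\in\mathbf{Z}}: m\geq0,\ 0\leq i\leq k^m-1\}$. *)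

theory Defs
  imports Main
begin

definition shift :: "(int \<Rightarrow> 'a) \<Rightarrow> (int \<Rightarrow> 'a)" where
  "shift x = (\<lambda>n. x (n + 1))"

text \<open>Action of a constant-length-k substitution on two-sided sequences:
phi(x) is the concatenation of the phi(x_n), with phi(x_0) starting at position 0.\<close>
definition subst_seq :: "('a \<Rightarrow> 'a list) \<Rightarrow> nat \<Rightarrow> (int \<Rightarrow> 'a) \<Rightarrow> (int \<Rightarrow> 'a)" where
  "subst_seq phi k x = (\<lambda>n. phi (x (n div int k)) ! nat (n mod int k))"

definition Psi :: "('a \<Rightarrow> 'a list) \<Rightarrow> nat \<Rightarrow> 'a \<Rightarrow> 'a" where
  "Psi phi i a = phi a ! i"

text \<open>Psi_{i_0 ... i_{m-1}} = Psi_{i_{m-1}} o ... o Psi_{i_0}, applied letterwise.\<close>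
definition Psi_word :: "('a \<Rightarrow> 'a list) \<Rightarrow> nat list \<Rightarrow> (int \<Rightarrow> 'a) \<Rightarrow> (int \<Rightarrow> 'a)" where
  "Psi_word phi is x = (\<lambda>n. fold (Psi phi) is (x n))"

definition kernel :: "nat \<Rightarrow> (int \<Rightarrow> 'a) \<Rightarrow> (int \<Rightarrow> 'a) set" where
  "kernel k x = {(\<lambda>n. x (int (k ^ m) * n + int i)) | m i. i < k ^ m}"

end

theory Submission
  imports Defs
begin

definition val :: "nat \<Rightarrow> nat list \<Rightarrow> nat" where
  "val k ws = (\<Sum>l<length ws. ws ! (length ws - l - 1) * k ^ l)"

definition Cs :: "nat \<Rightarrow> (nat \<Rightarrow> nat) \<Rightarrow> nat \<Rightarrow> nat \<Rightarrow> nat" where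
  "Cs k c j m = (\<Sum>l<m. c (j + l) * k ^ l)"

lemma val_snoc: "val k (ws @ [r]) = k * val k ws + r"
proof -
  have "val k (ws @ [r]) = (\<Sum>l<Suc (length ws). (ws @ [r]) ! (length ws - l) * k ^ l)"
    by (simp add: val_def)
  also have "\<dots> = r + (\<Sum>l<length ws. (ws @ [r]) ! (length ws - Suc l) * k ^ Suc l)"
    by (subst sum.lessThan_Suc_shift) simp
  also have "(\<Sum>l<length ws. (ws @ [r]) ! (length ws - Suc l) * k ^ Suc l)
      = k * (\<Sum>l<length ws. ws ! (length ws - l - 1) * k ^ l)"
    by (simp add: sum_distrib_left algebra_simps, intro sum.cong) (auto simp: nth_append)
  finally show ?thesis by (simp add: val_def)
qed

lemma val_Nil: "val k [] = 0" by (simp add: val_def)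

lemma Cs_Suc: "Cs k c j (Suc m) = c j + k * Cs k c (Suc j) m"
  unfolding Cs_def
  by (subst sum.lessThan_Suc_shift) (simp add: sum_distrib_left algebra_simps)

lemma Cs_bound: assumes "\<And>i. c i < k" shows "Cs k c j m < k ^ m"
proof (induction m arbitrary: j)
  case 0 then show ?case by (simp add: Cs_def)
next
  case (Suc m)
  have "Cs k c (Suc j) m + 1 \<le> k ^ m" using Suc[of "Suc j"] by simp
  hence "k * (Cs k c (Suc j) m + 1) \<le> k * k ^ m" by (rule mult_le_mono2)
  moreover have "c j < k" using assms by simp
  ultimately show ?case by (simp add: Cs_Suc algebra_simps)
qed

lemma val_bound: assumes "set ws \<subseteq> {0..<k}" shows "val k ws < k ^ length ws"
  using assms
proof (induction "ws" rule: rev_induct)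
  case Nil then show ?case by (simp add: val_Nil)
next
  case (snoc r ws)
  have "val k ws + 1 \<le> k ^ length ws" using snoc by simp
  hence "k * (val k ws + 1) \<le> k * k ^ length ws" by (rule mult_le_mono2)
  moreover have "r < k" using snoc by simp
  ultimately show ?case by (simp add: val_snoc algebra_simps)
qed

lemma val_exists: "v < k ^ m \<Longrightarrow> \<exists>ws. length ws = m \<and> set ws \<subseteq> {0..<k} \<and> val k ws = v"
proof (induction m arbitrary: v)
  case 0 then show ?case by (intro exI[of _ "[]"]) (simp add: val_Nil)
next
  case (Suc m)
  have kpos: "k > 0" using Suc.prems by (cases k) auto
  have "v div k < k ^ m" using Suc.prems
    by (simp add: div_less_iff_less_mult kpos mult.commute)
  then obtain ws where "length ws = m" "set ws \<subseteq> {0..<k}" "val k ws = v div k"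
    using Suc.IH by blast
  then show ?case using kpos
    by (intro exI[of _ "ws @ [v mod k]"]) (simp add: val_snoc)
qed

lemma shift_pow: "(shift ^^ n) y = (\<lambda>t. y (t + int n))"
  by (induction n arbitrary: y) (auto simp: shift_def algebra_simps)

lemma Psi_word_snoc: "Psi_word phi (ws @ [r]) y q = Psi phi r (Psi_word phi ws y q)"
  by (simp add: Psi_word_def)

lemma key:
  fixes phi :: "'a \<Rightarrow> 'a list" and k :: nat
    and xs :: "nat \<Rightarrow> int \<Rightarrow> 'a" and c :: "nat \<Rightarrow> nat"
  assumes k2: "k \<ge> 2"
    and cb: "\<And>i. c i < k"
    and rec: "\<And>i. xs i = ((shift ^^ c i) (subst_seq phi k (xs (i + 1))))"
  shows "set ws \<subseteq> {0..<k} \<Longrightarrow>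
    Psi_word phi ws (xs (j + length ws)) q
      = xs j (int (k ^ length ws) * q + int (val k ws) - int (Cs k c j (length ws)))"
proof (induction "ws" arbitrary: j q rule: rev_induct)
  case Nil then show ?case by (simp add: Psi_word_def val_Nil Cs_def)
next
  case (snoc r ws)
  let ?m = "length ws"
  define p where "p = int (k ^ ?m) * q + int (val k ws) - int (Cs k c (Suc j) ?m)"
  have IH: "Psi_word phi ws (xs (Suc j + ?m)) q = xs (Suc j) p"
    using snoc.IH[of "Suc j" q] snoc.prems p_def by simp
  have r: "r < k" using snoc by simp
  have "Psi_word phi (ws @ [r]) (xs (j + length (ws @ [r]))) q = Psi phi r (xs (Suc j) p)"
    using IH by (simp add: Psi_word_snoc)
  also have "\<dots> = phi (xs (Suc j) p) ! r" by (simp add: Psi_def)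
  also have "\<dots> = xs j (int k * p + int r - int (c j))"
  proof -
    have kp: "int k > 0" using k2 by simp
    have d: "(int k * p + int r) div int k = p" using r kp by simp
    have mo: "(int k * p + int r) mod int k = int r" using r kp by simp
    have e: "xs j (int k * p + int r - int (c j)) = phi (xs (Suc j) p) ! r"
      using rec[of j] r by (simp add: shift_pow subst_seq_def d mo)
    show ?thesis using e by simp
  qed
  also have "int k * p + int r - int (c j)
      = int (k ^ length (ws @ [r])) * q + int (val k (ws @ [r])) - int (Cs k c j (length (ws @ [r])))"
    by (simp add: p_def val_snoc Cs_Suc algebra_simps)
  finally show ?case .
qed

theorem lemma2p7:
  fixes phi :: "'a \<Rightarrow> 'a list" and k :: nat
    and x :: "int \<Rightarrow> 'a" and xs :: "nat \<Rightarrow> int \<Rightarrow> 'a" and c :: "nat \<Rightarrow> nat"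
  assumes "k \<ge> 2"
    and "\<And>a. length (phi a) = k"
    and "\<And>i. c i < k"
    and "xs 0 = x"
    and "\<And>i. xs i = ((shift ^^ c i) (subst_seq phi k (xs (i + 1))))"
  shows "kernel k x =
     {Psi_word phi is (xs m) | m is. length is = m \<and> set is \<subseteq> {0..<k} \<and>
        (\<Sum>l<m. is ! (m - l - 1) * k ^ l) \<ge> (\<Sum>l<m. c l * k ^ l)}
   \<union> {Psi_word phi is (shift (xs m)) | m is. length is = m \<and> set is \<subseteq> {0..<k} \<and>
        (\<Sum>l<m. is ! (m - l - 1) * k ^ l) < (\<Sum>l<m. c l * k ^ l)}"
proof -
  have K: "\<And>ws q. set ws \<subseteq> {0..<k} \<Longrightarrow> Psi_word phi ws (xs (length ws)) q
      = x (int (k ^ length ws) * q + int (val k ws) - int (Cs k c 0 (length ws)))"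
    using key[where phi=phi and k=k and c=c and xs=xs and j=0, OF assms(1) assms(3) assms(5)] assms(4) by simp
  have V: "\<And>ws m. length ws = m \<Longrightarrow> (\<Sum>l<m. ws ! (m - l - 1) * k ^ l) = val k ws"
    by (simp add: val_def)
  have C: "\<And>m. (\<Sum>l<m. c l * k ^ l) = Cs k c 0 m" by (simp add: Cs_def)
  have CB: "\<And>m. Cs k c 0 m < k ^ m" using Cs_bound assms(3) by blast
  have SH: "\<And>ws y n. Psi_word phi ws (shift y) n = Psi_word phi ws y (n + 1)"
    by (simp add: Psi_word_def shift_def)
  show ?thesis
  proof (rule set_eqI, rule iffI)
    fix y assume "y \<in> kernel k x"
    then obtain m i where y: "y = (\<lambda>n. x (int (k ^ m) * n + int i))" and i: "i < k ^ m"
      by (auto simp: kernel_def)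
    have kp: "k ^ m > 0" using assms(1) by simp
    obtain ws where ws: "length ws = m" "set ws \<subseteq> {0..<k}" "val k ws = (i + Cs k c 0 m) mod k ^ m"
      using val_exists[of "(i + Cs k c 0 m) mod k ^ m" k m] kp by auto
    show "y \<in> {Psi_word phi is (xs m) | m is. length is = m \<and> set is \<subseteq> {0..<k} \<and>
        (\<Sum>l<m. is ! (m - l - 1) * k ^ l) \<ge> (\<Sum>l<m. c l * k ^ l)}
   \<union> {Psi_word phi is (shift (xs m)) | m is. length is = m \<and> set is \<subseteq> {0..<k} \<and>
        (\<Sum>l<m. is ! (m - l - 1) * k ^ l) < (\<Sum>l<m. c l * k ^ l)}"
    proof (cases "i + Cs k c 0 m < k ^ m")
      case True
      hence v: "val k ws = i + Cs k c 0 m" using ws by simp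
      have "y = Psi_word phi ws (xs m)"
        using K[OF ws(2)] ws(1) v y by (auto simp: fun_eq_iff)
      then show ?thesis using ws v V C by auto
    next
      case False
      hence v: "val k ws = i + Cs k c 0 m - k ^ m" using ws i CB[of m]
        by (simp add: le_mod_geq)
      have "y = Psi_word phi ws (shift (xs m))"
        using K[OF ws(2)] ws(1) v y False by (auto simp: fun_eq_iff SH algebra_simps of_nat_diff)
      moreover have "val k ws < Cs k c 0 m" using v i False by simp
      ultimately show ?thesis using ws V C by auto
    qed
  next
    fix y assume "y \<in> {Psi_word phi is (xs m) | m is. length is = m \<and> set is \<subseteq> {0..<k} \<and>
        (\<Sum>l<m. is ! (m - l - 1) * k ^ l) \<ge> (\<Sum>l<m. c l * k ^ l)}
   \<union> {Psi_word phi is (shift (xs m)) | m is. length is = m \<and> set is \<subseteq> {0..<k} \<and>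
        (\<Sum>l<m. is ! (m - l - 1) * k ^ l) < (\<Sum>l<m. c l * k ^ l)}"
    then show "y \<in> kernel k x"
    proof
      assume "y \<in> {Psi_word phi is (xs m) | m is. length is = m \<and> set is \<subseteq> {0..<k} \<and>
        (\<Sum>l<m. is ! (m - l - 1) * k ^ l) \<ge> (\<Sum>l<m. c l * k ^ l)}"
      then obtain ws where ws: "set ws \<subseteq> {0..<k}" "val k ws \<ge> Cs k c 0 (length ws)"
        and y: "y = Psi_word phi ws (xs (length ws))"
        using V C by auto
      have "val k ws < k ^ length ws" using val_bound ws by blast
      moreover have "y = (\<lambda>n. x (int (k ^ length ws) * n + int (val k ws - Cs k c 0 (length ws))))"
        using K[OF ws(1)] y ws(2) by (auto simp: fun_eq_iff of_nat_diff algebra_simps)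
      ultimately show ?thesis unfolding kernel_def
        by (intro CollectI exI[of _ "length ws"] exI[of _ "val k ws - Cs k c 0 (length ws)"]) auto
    next
      assume "y \<in> {Psi_word phi is (shift (xs m)) | m is. length is = m \<and> set is \<subseteq> {0..<k} \<and>
        (\<Sum>l<m. is ! (m - l - 1) * k ^ l) < (\<Sum>l<m. c l * k ^ l)}"
      then obtain ws where ws: "set ws \<subseteq> {0..<k}" "val k ws < Cs k c 0 (length ws)"
        and y: "y = Psi_word phi ws (shift (xs (length ws)))"
        using V C by auto
      have cb: "Cs k c 0 (length ws) < k ^ length ws" using CB by blast
      have "y = (\<lambda>n. x (int (k ^ length ws) * n + int (k ^ length ws + val k ws - Cs k c 0 (length ws))))"
        using K[OF ws(1)] y ws(2) cb by (auto simp: fun_eq_iff of_nat_diff SH algebra_simps)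
      moreover have "k ^ length ws + val k ws - Cs k c 0 (length ws) < k ^ length ws" using ws(2) cb by arith
      ultimately show ?thesis unfolding kernel_def
        by (intro CollectI exI[of _ "length ws"] exI[of _ "k ^ length ws + val k ws - Cs k c 0 (length ws)"]) auto
    qed
  qed
qed

end
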